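(* Let $G=(V,E)$ be a graph with maximum (undirected) degree $\Delta$ and arboricity $\alpha$, let $\mu$ be an orientation of its edges with out-degree at most $2\alpha$, let $h\le\log\alpha$, and consider Procedure Oriented Edge-Coloring$(G,\mu,h)$. For every $0\le i\le h$, the maximum (undirected) degree $\Delta^{(i)}$ of any graph $G^{(i)}$ computed after $i$ levels of recursion satisfies $\Delta^{(i)}\le\frac{\Delta}{2^i}+2$.
   Context: Logarithms are base 2. The arboricity of $G$ is $\max_{S\subseteq V,|S|\ge2}\lceil |E(G[S])|/(|S|-1)\rceil$. An oriented degree-splitting of $(H,\mu)$ with discrepancy $\kappa$ is a partition $(E_1,E_2)$ of $E(H)$ such that for every vertex $v$, the numbers of incoming edges of $v$ in $E_1$ and in $E_2$ differ by at most $\kappa$, and likewise for outgoing edges. Procedure Oriented Edge-Coloring$(H,\mu,h)$: if $h=0$, return a proper $(\Delta(H)+1)$-edge-coloring of $H$ from a base-case subroutine; otherwise compute an oriented degree-splitting $(E_1,E_2)$ of $(H,\mu)$ with discrepancy at most 1, recursively call Oriented Edge-Coloring$(H_1,\mu,h-1)$ and Oriented Edge-Coloring$(H_2,\mu,h-1)$ on $H_1=(V,E_1)$, $H_2=(V,E_2)$ (with the orientation induced by $\mu$), and merge the colorings using disjoint palettes. $G^{(0)}=G$, and a graph computed after $i$ levels of recursion is any $H_1$ or $H_2$ produced from a graph computed after $i-1$ levels. *)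

theory Defs
  imports Complex_Main
begin

definition graph :: "'a set \<Rightarrow> 'a set set \<Rightarrow> bool" where
  "graph V E \<longleftrightarrow> finite V \<and> E \<subseteq> {{u, v} | u v. u \<in> V \<and> v \<in> V \<and> u \<noteq> v}"

text \<open>An orientation mu assigns to each edge its tail (the endpoint it leaves).\<close>
definition is_orientation :: "'a set set \<Rightarrow> ('a set \<Rightarrow> 'a) \<Rightarrow> bool" where
  "is_orientation E mu \<longleftrightarrow> (\<forall>e\<in>E. mu e \<in> e)"

definition degree :: "'a set set \<Rightarrow> 'a \<Rightarrow> nat" where
  "degree E v = card {e \<in> E. v \<in> e}"

definition outdeg :: "'a set set \<Rightarrow> ('a set \<Rightarrow> 'a) \<Rightarrow> 'a \<Rightarrow> nat" where
  "outdeg E mu v = card {e \<in> E. v \<in> e \<and> mu e = v}"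

definition indeg :: "'a set set \<Rightarrow> ('a set \<Rightarrow> 'a) \<Rightarrow> 'a \<Rightarrow> nat" where
  "indeg E mu v = card {e \<in> E. v \<in> e \<and> mu e \<noteq> v}"

definition max_degree :: "'a set \<Rightarrow> 'a set set \<Rightarrow> nat" where
  "max_degree V E = Max (insert 0 (degree E ` V))"

definition induced_edges :: "'a set set \<Rightarrow> 'a set \<Rightarrow> 'a set set" where
  "induced_edges E S = {e \<in> E. e \<subseteq> S}"

definition arboricity :: "'a set \<Rightarrow> 'a set set \<Rightarrow> nat" where
  "arboricity V E = Max (insert 0
     {nat \<lceil>real (card (induced_edges E S)) / (real (card S) - 1)\<rceil> | S. S \<subseteq> V \<and> card S \<ge> 2})"

definition oriented_degree_splitting ::
  "'a set \<Rightarrow> 'a set set \<Rightarrow> ('a set \<Rightarrow> 'a) \<Rightarrow> int \<Rightarrow> 'a set set \<Rightarrow> 'a set set \<Rightarrow> bool" where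
  "oriented_degree_splitting V H mu kappa E1 E2 \<longleftrightarrow>
     E1 \<union> E2 = H \<and> E1 \<inter> E2 = {} \<and>
     (\<forall>v\<in>V. \<bar>int (indeg E1 mu v) - int (indeg E2 mu v)\<bar> \<le> kappa \<and>
             \<bar>int (outdeg E1 mu v) - int (outdeg E2 mu v)\<bar> \<le> kappa)"

text \<open>Edge sets of the graphs computed after i levels of recursion of
  Oriented Edge-Coloring(G,mu,h), for any choice of splittings with discrepancy at most 1.\<close>
inductive computed_after :: "'a set \<Rightarrow> 'a set set \<Rightarrow> ('a set \<Rightarrow> 'a) \<Rightarrow> nat \<Rightarrow> 'a set set \<Rightarrow> bool"
  for V E mu where
  base: "computed_after V E mu 0 E"
| left: "computed_after V E mu i H \<Longrightarrow> oriented_degree_splitting V H mu 1 E1 E2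
          \<Longrightarrow> computed_after V E mu (Suc i) E1"
| right: "computed_after V E mu i H \<Longrightarrow> oriented_degree_splitting V H mu 1 E1 E2
          \<Longrightarrow> computed_after V E mu (Suc i) E2"

end

theory Submission
  imports Defs
begin

lemma ca_subset: "computed_after V E mu i H \<Longrightarrow> H \<subseteq> E"
  by (induction rule: computed_after.induct) (auto simp: oriented_degree_splitting_def)

lemma graph_finite: "graph V E \<Longrightarrow> finite E"
proof -
  assume g: "graph V E"
  hence "E \<subseteq> Pow V" "finite V" unfolding graph_def by auto
  thus ?thesis by (meson finite_Pow_iff finite_subset)
qed

lemma deg_split: "finite H \<Longrightarrow> degree H v = indeg H mu v + outdeg H mu v"
  unfolding degree_def indeg_def outdeg_def
proof -
  assume f: "finite H"
  have "{e \<in> H. v \<in> e} = {e \<in> H. v \<in> e \<and> mu e \<noteq> v} \<union> {e \<in> H. v \<in> e \<and> mu e = v}" by auto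
  moreover have "card ({e \<in> H. v \<in> e \<and> mu e \<noteq> v} \<union> {e \<in> H. v \<in> e \<and> mu e = v})
     = card {e \<in> H. v \<in> e \<and> mu e \<noteq> v} + card {e \<in> H. v \<in> e \<and> mu e = v}"
    by (rule card_Un_disjoint) (use f in auto)
  ultimately show "card {e \<in> H. v \<in> e} = card {e \<in> H. v \<in> e \<and> mu e \<noteq> v} + card {e \<in> H. v \<in> e \<and> mu e = v}" by simp
qed

lemma card_part: "finite H \<Longrightarrow> E1 \<union> E2 = H \<Longrightarrow> E1 \<inter> E2 = {} \<Longrightarrow>
   card {e \<in> H. P e} = card {e \<in> E1. P e} + card {e \<in> E2. P e}"
proof -
  assume f: "finite H" and u: "E1 \<union> E2 = H" and d: "E1 \<inter> E2 = {}"
  have "{e \<in> H. P e} = {e \<in> E1. P e} \<union> {e \<in> E2. P e}" using u by auto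
  moreover have "card ({e \<in> E1. P e} \<union> {e \<in> E2. P e}) = card {e \<in> E1. P e} + card {e \<in> E2. P e}"
    by (rule card_Un_disjoint) (use f u d in auto)
  ultimately show ?thesis by simp
qed

lemma split_step:
  assumes f: "finite H" and s: "oriented_degree_splitting V H mu 1 E1 E2" and v: "v \<in> V"
  shows "real (degree E1 v) \<le> real (degree H v) / 2 + 1 \<and> real (degree E2 v) \<le> real (degree H v) / 2 + 1"
proof -
  have u: "E1 \<union> E2 = H" and d: "E1 \<inter> E2 = {}"
    and a: "\<bar>int (indeg E1 mu v) - int (indeg E2 mu v)\<bar> \<le> 1"
    and b: "\<bar>int (outdeg E1 mu v) - int (outdeg E2 mu v)\<bar> \<le> 1"
    using s v unfolding oriented_degree_splitting_def by auto
  have f1: "finite E1" "finite E2" using f u by auto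
  have i: "indeg H mu v = indeg E1 mu v + indeg E2 mu v"
    unfolding indeg_def by (rule card_part[OF f u d])
  have o: "outdeg H mu v = outdeg E1 mu v + outdeg E2 mu v"
    unfolding outdeg_def by (rule card_part[OF f u d])
  show ?thesis using deg_split[OF f, of v mu] deg_split[OF f1(1), of v mu] deg_split[OF f1(2), of v mu] i o a b
    by linarith
qed

lemma main_bound:
  assumes "computed_after V E mu i H" and "finite E"
    and that: "\<forall>v\<in>V. real (degree E v) \<le> D"
  shows "\<forall>v\<in>V. real (degree H v) \<le> D / 2 ^ i + 2 - 2 / 2 ^ i"
  using assms(1,2)
proof (induction rule: computed_after.induct)
  case base
  then show ?case using that by simp
next
  case (left i H E1 E2)
  have fH: "finite H" using ca_subset[OF left.hyps(1)] left.prems finite_subset by blast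
  show ?case
  proof
    fix v assume v: "v \<in> V"
    have "real (degree E1 v) \<le> real (degree H v) / 2 + 1" using split_step[OF fH left.hyps(2) v] by blast
    also have "\<dots> \<le> (D / 2 ^ i + 2 - 2 / 2 ^ i) / 2 + 1" using left.IH left.prems v by auto
    also have "\<dots> = D / 2 ^ Suc i + 2 - 2 / 2 ^ Suc i" by (simp add: field_simps)
    finally show "real (degree E1 v) \<le> D / 2 ^ Suc i + 2 - 2 / 2 ^ Suc i" .
  qed
next
  case (right i H E1 E2)
  have fH: "finite H" using ca_subset[OF right.hyps(1)] right.prems finite_subset by blast
  show ?case
  proof
    fix v assume v: "v \<in> V"
    have "real (degree E2 v) \<le> real (degree H v) / 2 + 1" using split_step[OF fH right.hyps(2) v] by blast
    also have "\<dots> \<le> (D / 2 ^ i + 2 - 2 / 2 ^ i) / 2 + 1" using right.IH right.prems v by auto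
    also have "\<dots> = D / 2 ^ Suc i + 2 - 2 / 2 ^ Suc i" by (simp add: field_simps)
    finally show "real (degree E2 v) \<le> D / 2 ^ Suc i + 2 - 2 / 2 ^ Suc i" .
  qed
qed

theorem corollary4p9:
  fixes V :: "'a set" and E :: "'a set set" and mu :: "'a set \<Rightarrow> 'a"
    and h i :: nat and H :: "'a set set"
  assumes "graph V E"
    and "is_orientation E mu"
    and "\<forall>v\<in>V. outdeg E mu v \<le> 2 * arboricity V E"
    and "real h \<le> log 2 (real (arboricity V E))"
    and "i \<le> h"
    and "computed_after V E mu i H"
  shows "real (max_degree V H) \<le> real (max_degree V E) / 2 ^ i + 2"
proof -
  have fV: "finite V" using assms(1) unfolding graph_def by auto
  have fE: "finite E" using graph_finite[OF assms(1)] .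
  let ?D = "real (max_degree V E)"
  have "\<forall>v\<in>V. real (degree E v) \<le> ?D"
    unfolding max_degree_def using fV by auto
  hence b: "\<forall>v\<in>V. real (degree H v) \<le> ?D / 2 ^ i + 2 - 2 / 2 ^ i"
    using main_bound[OF assms(6) fE] by blast
  have pos: "(0::real) \<le> 2 / 2 ^ i" by simp
  have "\<forall>x \<in> insert 0 (degree H ` V). real x \<le> ?D / 2 ^ i + 2"
    using b pos by (auto intro: order_trans)
  moreover have "max_degree V H \<in> insert 0 (degree H ` V)"
    unfolding max_degree_def using fV by (intro Max_in) auto
  ultimately show ?thesis by blast
qed

end
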